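(* Let $(K,\delta)$ be a differential field of characteristic zero. Then $\mathrm{Stab}(\delta,K)=\mathrm{Attrac}(\delta,K)$.
   Context: A differential field $(K,\delta)$ is a field $K$ with an additive map $\delta:K\to K$ such that $\delta(fg)=f\delta(g)+g\delta(f)$. $\mathrm{Stab}(\delta,K)$ is the set of $a\in K$ for which there is a sequence $(a_i)_{i\ge0}$ in $K$ with $a_0=a$ and $\delta(a_{i+1})=a_i$ for all $i\in\mathbb{N}$ (stable elements). $\mathrm{Attrac}(\delta,K)=\bigcap_{i\in\mathbb{N}}\delta^i(K)$ is the set of $a\in K$ such that for every $i\in\mathbb{N}$ there is $a_i\in K$ with $a=\delta^i(a_i)$ (attractive elements). *)

theory Defs
  imports Main
begin

definition is_derivation :: "('a::field \<Rightarrow> 'a) \<Rightarrow> bool" where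
  "is_derivation \<delta> \<longleftrightarrow>
     (\<forall>f g. \<delta> (f + g) = \<delta> f + \<delta> g) \<and>
     (\<forall>f g. \<delta> (f * g) = f * \<delta> g + g * \<delta> f)"

definition Stab :: "('a \<Rightarrow> 'a) \<Rightarrow> 'a set" where
  "Stab \<delta> = {a. \<exists>s :: nat \<Rightarrow> 'a. s 0 = a \<and> (\<forall>i. \<delta> (s (Suc i)) = s i)}"

definition Attrac :: "('a \<Rightarrow> 'a) \<Rightarrow> 'a set" where
  "Attrac \<delta> = (\<Inter>i. range (\<delta> ^^ i))"

end

theory Submission
  imports Defs
begin

locale dfield =
  fixes \<delta> :: "'a::field \<Rightarrow> 'a"
  assumes der: "is_derivation \<delta>"
begin

lemma add: "\<delta> (f + g) = \<delta> f + \<delta> g" and mul: "\<delta> (f * g) = f * \<delta> g + g * \<delta> f"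
  using der unfolding is_derivation_def by auto

lemma zero: "\<delta> 0 = 0"
proof -
  have "\<delta> 0 + \<delta> 0 = \<delta> 0" using add[of 0 0] by simp
  then show ?thesis by (metis add_cancel_right_right)
qed

lemma one: "\<delta> 1 = 0"
proof -
  have "\<delta> 1 + \<delta> 1 = \<delta> 1" using mul[of 1 1] by simp
  then show ?thesis by (metis add_cancel_right_right)
qed

lemma minus: "\<delta> (- f) = - \<delta> f"
  using add[of f "-f"] zero by (simp add: eq_neg_iff_add_eq_0 add.commute)

lemma diff: "\<delta> (f - g) = \<delta> f - \<delta> g"
  using add[of f "-g"] minus by simp

lemma pow_add: "(\<delta> ^^ m) (f + g) = (\<delta> ^^ m) f + (\<delta> ^^ m) g"
  by (induction m) (auto simp: add)

lemma pow_diff: "(\<delta> ^^ m) (f - g) = (\<delta> ^^ m) f - (\<delta> ^^ m) g"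
  by (induction m) (auto simp: diff)

lemma pow_const: "\<delta> c = 0 \<Longrightarrow> (\<delta> ^^ m) (c * y) = c * (\<delta> ^^ m) y"
proof (induction m)
  case (Suc m) then show ?case by (simp add: mul)
qed simp

lemma range_diff: "x \<in> range (\<delta> ^^ m) \<Longrightarrow> y \<in> range (\<delta> ^^ m) \<Longrightarrow> x - y \<in> range (\<delta> ^^ m)"
  by (auto simp: pow_diff[symmetric])

lemma range_mono: "m \<le> n \<Longrightarrow> range (\<delta> ^^ n) \<subseteq> range (\<delta> ^^ m)"
proof -
  assume "m \<le> n"
  then obtain k where n: "n = m + k" using le_Suc_ex by blast
  show ?thesis unfolding n funpow_add by auto
qed

lemma step:
  assumes a: "a \<in> Attrac \<delta>"
  shows "\<exists>b. \<delta> b = a \<and> b \<in> Attrac \<delta>"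
proof -
  have "a \<in> range (\<delta> ^^ 1)" using a unfolding Attrac_def by blast
  then obtain b1 where b1: "\<delta> b1 = a" by auto
  have ex: "\<exists>c. \<delta> c = 0 \<and> b1 + c \<in> range (\<delta> ^^ m)" for m
  proof -
    have "a \<in> range (\<delta> ^^ Suc m)" using a unfolding Attrac_def by blast
    then obtain y where y: "a = \<delta> ((\<delta> ^^ m) y)" by auto
    show ?thesis
      by (rule exI[of _ "(\<delta> ^^ m) y - b1"]) (auto simp: diff y b1)
  qed
  show ?thesis
  proof (cases "\<forall>m. 1 \<in> range (\<delta> ^^ m)")
    case True
    have "b1 \<in> range (\<delta> ^^ m)" for m
    proof -
      obtain c where c: "\<delta> c = 0" "b1 + c \<in> range (\<delta> ^^ m)" using ex by blast
      obtain y where y: "1 = (\<delta> ^^ m) y" using True by blast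
      have "c = (\<delta> ^^ m) (c * y)" using pow_const[OF c(1)] y by simp
      then have "c \<in> range (\<delta> ^^ m)" by auto
      from range_diff[OF c(2) this] show ?thesis by simp
    qed
    then show ?thesis using b1 unfolding Attrac_def by blast
  next
    case False
    then obtain m0 where m0: "1 \<notin> range (\<delta> ^^ m0)" by blast
    obtain c0 where c0: "\<delta> c0 = 0" "b1 + c0 \<in> range (\<delta> ^^ m0)" using ex by blast
    have "b1 + c0 \<in> range (\<delta> ^^ m)" for m
    proof -
      obtain c where c: "\<delta> c = 0" "b1 + c \<in> range (\<delta> ^^ (m + m0))" using ex by blast
      have r0: "b1 + c \<in> range (\<delta> ^^ m0)" and rm: "b1 + c \<in> range (\<delta> ^^ m)"
        using c(2) range_mono[of m0 "m + m0"] range_mono[of m "m + m0"] by auto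
      have "c = c0"
      proof (rule ccontr)
        assume ne: "c \<noteq> c0"
        have "(b1 + c) - (b1 + c0) \<in> range (\<delta> ^^ m0)" by (rule range_diff[OF r0 c0(2)])
        then obtain y where y: "c - c0 = (\<delta> ^^ m0) y" by auto
        have dc: "\<delta> (inverse (c - c0)) = 0"
        proof -
          have "\<delta> (c - c0) = 0" using c(1) c0(1) diff by simp
          have "0 = \<delta> ((c - c0) * inverse (c - c0))" using ne one by simp
          also have "\<dots> = (c - c0) * \<delta> (inverse (c - c0))"
            using mul \<open>\<delta> (c - c0) = 0\<close> by simp
          finally show ?thesis using ne by simp
        qed
        have "(\<delta> ^^ m0) (inverse (c - c0) * y) = inverse (c - c0) * (c - c0)"
          using pow_const[OF dc, of m0 y] y by simp
        then have "1 = (\<delta> ^^ m0) (inverse (c - c0) * y)" using ne by simp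
        then show False using m0 by auto
      qed
      then show ?thesis using rm by simp
    qed
    then show ?thesis using b1 c0(1) add[of b1 c0] unfolding Attrac_def by auto
  qed
qed

end

theorem proposition2p4:
  fixes \<delta> :: "'a::field_char_0 \<Rightarrow> 'a"
  assumes "is_derivation \<delta>"
  shows "Stab \<delta> = Attrac \<delta>"
proof
  interpret dfield \<delta> by standard (rule assms)
  show "Stab \<delta> \<subseteq> Attrac \<delta>"
  proof
    fix a assume "a \<in> Stab \<delta>"
    then obtain s where s: "s 0 = a" "\<And>i. \<delta> (s (Suc i)) = s i" unfolding Stab_def by auto
    have "(\<delta> ^^ i) (s i) = a" for i
      by (induction i) (auto simp: s funpow_Suc_right simp del: funpow.simps)
    then show "a \<in> Attrac \<delta>" unfolding Attrac_def by (auto intro: sym)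
  qed
  show "Attrac \<delta> \<subseteq> Stab \<delta>"
  proof
    fix a assume a: "a \<in> Attrac \<delta>"
    define s where "s = rec_nat a (\<lambda>_ x. SOME b. \<delta> b = x \<and> b \<in> Attrac \<delta>)"
    have s0: "s 0 = a" and sS: "\<And>i. s (Suc i) = (SOME b. \<delta> b = s i \<and> b \<in> Attrac \<delta>)"
      by (simp_all add: s_def)
    have P: "s i \<in> Attrac \<delta> \<and> \<delta> (s (Suc i)) = s i" for i
    proof (induction i)
      case 0
      then show ?case using someI_ex[OF step[OF a]] a s0 sS by simp
    next
      case (Suc i)
      then have "s (Suc i) \<in> Attrac \<delta>" using someI_ex[OF step[of "s i"]] sS by simp
      then show ?case using someI_ex[OF step[of "s (Suc i)"]] sS[of "Suc i"] by simp
    qed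
    then show "a \<in> Stab \<delta>" unfolding Stab_def using s0 by blast
  qed
qed

end
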